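(* Let $\Gamma$ be a finite ranked poset. Then $\Gamma$ is Cohen–Macaulay if and only if for every $b\in\Gamma\setminus\{*\}$ and all integers $q,n$ with $rk(b)\ge q>n$ one has $\tilde H^{n-2}(\Delta(\Gamma_{b,q}))=0$.
   Context: A finite ranked poset is a finite poset $\Gamma$ (strict order $<$) with a unique minimal element $*$ such that for every $x\in\Gamma$ all maximal chains in $[*,x]$ have the same length, denoted $rk(x)$. For $b\in\Gamma$ and $1\le q\le rk(b)$, $\Gamma_{b,q}=\{a\in\Gamma: *<a<b,\ rk(b)-rk(a)\le q-1\}$. For a finite poset $P$, $\Delta(P)$ is its order complex (simplicial complex whose simplices are the nonempty chains of $P$). Reduced cohomology is taken with coefficients in a fixed field $\mathbb{F}$, with the convention $\tilde H^{-1}(\Delta(\emptyset))=\mathbb{F}$ and $\tilde H^{n}(\Delta(\emptyset))=0$ for $n\ne-1$. $\Gamma$ is Cohen–Macaulay if for all $a<b$ in $\Gamma$, $\tilde H^n(\Delta((a,b)))\ne0$ implies $n=\dim\Delta((a,b))$, where $(a,b)=\{c: a<c<b\}$. *)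

theory Defs
  imports Main
begin

text \<open>Finite posets are modelled as finite subsets of a type of class order;
  the strict order is the restriction of the type's strict order.\<close>

text \<open>The (k-1)-simplices of the order complex of P: the chains of P with k elements,
  listed in strictly increasing order (each chain exactly once). k = 0 gives the
  empty simplex (augmentation).\<close>
definition simplices :: "'a::order set \<Rightarrow> nat \<Rightarrow> 'a list set" where
  "simplices P k = {xs. length xs = k \<and> sorted_wrt (<) xs \<and> set xs \<subseteq> P}"

definition cochains :: "'a::order set \<Rightarrow> nat \<Rightarrow> ('a list \<Rightarrow> 'f::field) set" where
  "cochains P k = {f. \<forall>xs. xs \<notin> simplices P k \<longrightarrow> f xs = 0}"

definition coboundary :: "'a::order set \<Rightarrow> nat \<Rightarrow> ('a list \<Rightarrow> 'f::field) \<Rightarrow> ('a list \<Rightarrow> 'f)" where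
  "coboundary P k f xs =
     (if xs \<in> simplices P (Suc k)
      then (\<Sum>i<Suc k. (-1) ^ i * f (take i xs @ drop (Suc i) xs))
      else 0)"

definition coboundaries :: "'a::order set \<Rightarrow> nat \<Rightarrow> ('a list \<Rightarrow> 'f::field) set" where
  "coboundaries P k = (case k of 0 \<Rightarrow> {\<lambda>_. 0} | Suc j \<Rightarrow> coboundary P j ` cochains P j)"

text \<open>H^n(Delta(P); F) = 0: every cocycle of degree n is a coboundary.
  Degrees below -1 have zero cochains, hence zero cohomology.\<close>
definition reduced_cohomology_vanishes ::
    "'f::field itself \<Rightarrow> 'a::order set \<Rightarrow> int \<Rightarrow> bool" where
  "reduced_cohomology_vanishes TYPE('f) P n =
     (n < -1 \<or>
      (\<forall>f \<in> (cochains P (nat (n+1)) :: ('a list \<Rightarrow> 'f) set).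
          coboundary P (nat (n+1)) f = (\<lambda>_. 0) \<longrightarrow> f \<in> coboundaries P (nat (n+1))))"

definition order_complex_dim :: "'a::order set \<Rightarrow> int" where
  "order_complex_dim P = Max {int k - 1 | k. simplices P k \<noteq> {}}"

definition open_interval :: "'a::order set \<Rightarrow> 'a \<Rightarrow> 'a \<Rightarrow> 'a set" where
  "open_interval \<Gamma> a b = {c \<in> \<Gamma>. a < c \<and> c < b}"

definition closed_interval :: "'a::order set \<Rightarrow> 'a \<Rightarrow> 'a \<Rightarrow> 'a set" where
  "closed_interval \<Gamma> a b = {c \<in> \<Gamma>. a \<le> c \<and> c \<le> b}"

definition is_chain :: "'a::order set \<Rightarrow> 'a set \<Rightarrow> bool" where
  "is_chain I C \<longleftrightarrow> C \<subseteq> I \<and> (\<forall>x\<in>C. \<forall>y\<in>C. x \<le> y \<or> y \<le> x)"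

definition is_maximal_chain :: "'a::order set \<Rightarrow> 'a set \<Rightarrow> bool" where
  "is_maximal_chain I C \<longleftrightarrow> is_chain I C \<and> (\<forall>D. is_chain I D \<and> C \<subseteq> D \<longrightarrow> D = C)"

definition unique_minimal :: "'a::order set \<Rightarrow> 'a \<Rightarrow> bool" where
  "unique_minimal \<Gamma> s \<longleftrightarrow> s \<in> \<Gamma> \<and> (\<forall>x\<in>\<Gamma>. (\<not>(\<exists>y\<in>\<Gamma>. y < x)) \<longleftrightarrow> x = s)"

definition finite_ranked_poset :: "'a::order set \<Rightarrow> 'a \<Rightarrow> bool" where
  "finite_ranked_poset \<Gamma> s \<longleftrightarrow> finite \<Gamma> \<and> unique_minimal \<Gamma> s \<and>
     (\<forall>x\<in>\<Gamma>. \<forall>C D. is_maximal_chain (closed_interval \<Gamma> s x) C \<and>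
                     is_maximal_chain (closed_interval \<Gamma> s x) D \<longrightarrow> card C = card D)"

definition rk :: "'a::order set \<Rightarrow> 'a \<Rightarrow> 'a \<Rightarrow> nat" where
  "rk \<Gamma> s x = card (SOME C. is_maximal_chain (closed_interval \<Gamma> s x) C) - 1"

definition Gamma_bq :: "'a::order set \<Rightarrow> 'a \<Rightarrow> 'a \<Rightarrow> int \<Rightarrow> 'a set" where
  "Gamma_bq \<Gamma> s b q = {a \<in> \<Gamma>. s < a \<and> a < b \<and> int (rk \<Gamma> s b) - int (rk \<Gamma> s a) \<le> q - 1}"

definition cohen_macaulay :: "'f::field itself \<Rightarrow> 'a::order set \<Rightarrow> bool" where
  "cohen_macaulay TYPE('f) \<Gamma> \<longleftrightarrow>
     (\<forall>a\<in>\<Gamma>. \<forall>b\<in>\<Gamma>. a < b \<longrightarrow> (\<forall>n::int.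
        \<not> reduced_cohomology_vanishes TYPE('f) (open_interval \<Gamma> a b) n \<longrightarrow>
        n = order_complex_dim (open_interval \<Gamma> a b)))"

end

theory Submission
  imports Defs
begin


definition van :: "'f::field itself \<Rightarrow> 'a::order set \<Rightarrow> nat \<Rightarrow> bool" where
  "van TYPE('f) P k = (\<forall>f \<in> (cochains P k :: ('a list \<Rightarrow> 'f) set).
          coboundary P k f = (\<lambda>_. 0) \<longrightarrow> f \<in> coboundaries P k)"

lemma rcv_iff: "reduced_cohomology_vanishes TYPE('f::field) P n \<longleftrightarrow> (n < -1 \<or> van TYPE('f) P (nat (n+1)))"
  by (simp add: reduced_cohomology_vanishes_def van_def)

lemma sorted_face: "sorted_wrt (<) xs \<Longrightarrow> sorted_wrt (<) (take i xs @ drop (Suc i) xs)"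
proof -
  assume a: "sorted_wrt (<) xs"
  then have "sorted_wrt (<) (take i xs @ drop i xs)" by simp
  then have b: "sorted_wrt (<) (take i xs)" "sorted_wrt (<) (drop i xs)"
     "\<forall>x\<in>set (take i xs). \<forall>y\<in>set (drop i xs). x < y"
    unfolding sorted_wrt_append by auto
  have c: "set (drop (Suc i) xs) \<subseteq> set (drop i xs)"
    by (simp add: set_drop_subset_set_drop)
  have "sorted_wrt (<) (drop (Suc i) xs)" using a by (simp add: sorted_wrt_drop)
  then show ?thesis using b c unfolding sorted_wrt_append by auto
qed

lemma face_simp:
  assumes "xs \<in> simplices P (Suc k)" "i < Suc k"
  shows "take i xs @ drop (Suc i) xs \<in> simplices P k"
proof -
  have "set (take i xs @ drop (Suc i) xs) \<subseteq> set xs"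
    using set_take_subset set_drop_subset by fastforce
  then show ?thesis using assms sorted_face[of xs i] by (auto simp: simplices_def)
qed

lemma simplices_mono: "R \<subseteq> P \<Longrightarrow> simplices R k \<subseteq> simplices P k"
  by (auto simp: simplices_def)

lemma cob_agree:
  assumes "R \<subseteq> P" "ys \<in> simplices R (Suc k)" "\<forall>zs\<in>simplices R k. f zs = g zs"
  shows "coboundary P k f ys = coboundary R k g ys"
proof -
  have "ys \<in> simplices P (Suc k)" using assms simplices_mono by blast
  then show ?thesis using assms(2,3) face_simp[OF assms(2)]
    by (auto simp: coboundary_def intro!: sum.cong)
qed

lemma cob_cons:
  assumes "x # zs \<in> simplices P (Suc (Suc k))"
  shows "coboundary P (Suc k) F (x # zs) =
     F zs - (\<Sum>i<Suc k. (-1)^i * F (x # (take i zs @ drop (Suc i) zs)))"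
  using assms unfolding coboundary_def
  by (simp only: if_True sum.lessThan_Suc_shift) (simp add: sum_negf)

lemma cons_simplices: "x # zs \<in> simplices P (Suc k) \<longleftrightarrow> x \<in> P \<and> zs \<in> simplices {y\<in>P. x<y} k"
  by (auto simp: simplices_def)

lemma coboundaries0: "coboundaries P 0 = {\<lambda>_. 0}"
  by (simp add: coboundaries_def)

lemma zero_coboundaries: "(\<lambda>_. 0) \<in> coboundaries P k"
proof (cases k)
  case 0 then show ?thesis by (simp add: coboundaries_def)
next
  case (Suc j)
  have h1: "coboundary P j (\<lambda>_. 0) = (\<lambda>_. 0)" by (simp add: coboundary_def fun_eq_iff)
  have h2: "(\<lambda>_. 0) \<in> cochains P j" by (simp add: cochains_def)
  have "coboundary P j (\<lambda>_. 0) \<in> coboundary P j ` cochains P j" using h2 by (rule imageI)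
  then show ?thesis by (simp add: coboundaries_def Suc h1)
qed

lemma hd_min:
  assumes "ws \<in> simplices P k" "x \<in> set ws" "\<forall>y\<in>P. \<not> y < x"
  shows "ws = x # tl ws"
proof (cases ws)
  case Nil then show ?thesis using assms by simp
next
  case (Cons h t)
  show ?thesis
  proof (cases "h = x")
    case True then show ?thesis using Cons by simp
  next
    case False
    then have "x \<in> set t" using assms Cons by simp
    then have "h < x" using assms(1) Cons by (auto simp: simplices_def)
    moreover have "h \<in> P" using assms(1) Cons by (auto simp: simplices_def)
    ultimately show ?thesis using assms(3) by blast
  qed
qed


lemma hd_simp: "ws \<in> simplices P (Suc k) \<Longrightarrow> ws = hd ws # tl ws \<and> hd ws \<in> P"
  by (cases ws) (auto simp: simplices_def)

lemma van_Q:
  fixes P X :: "'a::order set"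
  assumes XP: "X \<subseteq> P" and minX: "\<And>x y. x \<in> X \<Longrightarrow> y \<in> P \<Longrightarrow> \<not> y < x"
    and vP: "van TYPE('f::field) P k"
    and vL: "\<And>x. x \<in> X \<Longrightarrow> van TYPE('f) {y\<in>P. x<y} k"
  shows "van TYPE('f) (P - X) k"
  unfolding van_def
proof (intro ballI impI)
  fix f :: "'a list \<Rightarrow> 'f"
  assume fC: "f \<in> cochains (P - X) k" and fZ: "coboundary (P - X) k f = (\<lambda>_. 0)"
  define L where "L x = {y\<in>P. x<y}" for x
  have LQ: "L x \<subseteq> P - X" if "x \<in> X" for x
  proof
    fix y assume y: "y \<in> L x"
    have "x \<in> P" using that XP by blast
    then have "y \<notin> X" using y minX[of y x] unfolding L_def by blast
    then show "y \<in> P - X" using y unfolding L_def by blast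
  qed
  have vL': "van TYPE('f) (L x) k" if "x \<in> X" for x using vL[OF that] by (simp add: L_def)
  define fr where "fr x = (\<lambda>ys. if ys \<in> simplices (L x) k then f ys else (0::'f))" for x
  have frC: "fr x \<in> cochains (L x) k" for x
    unfolding fr_def cochains_def by auto
  have frZ: "coboundary (L x) k (fr x) = (\<lambda>_. 0)" if "x \<in> X" for x
  proof
    fix ys
    show "coboundary (L x) k (fr x) ys = 0"
    proof (cases "ys \<in> simplices (L x) (Suc k)")
      case True
      have eq: "coboundary (P - X) k f ys = coboundary (L x) k (fr x) ys"
        by (rule cob_agree[OF LQ[OF that] True]) (simp add: fr_def)
      have "coboundary (P - X) k f ys = 0" using fZ by simp
      with eq show ?thesis by simp
    next
      case False then show ?thesis by (simp add: coboundary_def)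
    qed
  qed
  have frB: "fr x \<in> coboundaries (L x) k" if "x \<in> X" for x
    using vL'[OF that] frC frZ[OF that] unfolding van_def by blast
  show "f \<in> coboundaries (P - X) k"
  proof (cases k)
    case 0
    show ?thesis
    proof (cases "X = {}")
      case True
      then show ?thesis using vP fC fZ unfolding van_def by simp
    next
      case False
      then obtain x where x: "x \<in> X" by blast
      have "fr x = (\<lambda>_. 0)" using frB[OF x] 0 by (simp add: coboundaries0)
      then have "fr x [] = 0" by simp
      then have f0: "f [] = 0" by (simp add: fr_def simplices_def 0)
      have "f = (\<lambda>_. 0)"
      proof
        fix ys show "f ys = 0"
        proof (cases "ys = []")
          case True with f0 show ?thesis by simp
        next
          case False
          then have "ys \<notin> simplices (P - X) k" using 0 by (simp add: simplices_def)
          then show ?thesis using fC by (simp add: cochains_def)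
        qed
      qed
      then show ?thesis by (simp add: zero_coboundaries)
    qed
  next
    case (Suc j)
    have "\<forall>x\<in>X. \<exists>g. g \<in> cochains (L x) j \<and> coboundary (L x) j g = fr x"
    proof
      fix x assume x: "x \<in> X"
      have "fr x \<in> coboundary (L x) j ` cochains (L x) j"
        using frB[OF x] by (simp add: coboundaries_def Suc)
      then obtain g where "g \<in> cochains (L x) j" "fr x = coboundary (L x) j g" by blast
      then show "\<exists>g. g \<in> cochains (L x) j \<and> coboundary (L x) j g = fr x" by auto
    qed
    then have "\<exists>g. \<forall>x\<in>X. g x \<in> cochains (L x) j \<and> coboundary (L x) j (g x) = fr x"
      by (rule bchoice)
    then obtain g where g0: "\<forall>x\<in>X. g x \<in> cochains (L x) j \<and> coboundary (L x) j (g x) = fr x"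
      by (elim exE)
    have g1: "g x \<in> cochains (L x) j" if "x \<in> X" for x using g0 that by blast
    have g2: "coboundary (L x) j (g x) = fr x" if "x \<in> X" for x using g0 that by blast
    define F where "F ws = (if ws \<noteq> [] \<and> hd ws \<in> X then g (hd ws) (tl ws) else f ws)" for ws
    have FC: "F \<in> cochains P (Suc j)"
      unfolding cochains_def
    proof (intro CollectI allI impI)
      fix ws assume ws: "ws \<notin> simplices P (Suc j)"
      show "F ws = 0"
      proof (cases "ws \<noteq> [] \<and> hd ws \<in> X")
        case True
        then obtain x zs where wz: "ws = x # zs" and x: "x \<in> X" by (cases ws) auto
        have "zs \<notin> simplices (L x) j"
        proof
          assume "zs \<in> simplices (L x) j"
          then have "ws \<in> simplices P (Suc j)" using x XP unfolding wz L_def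
            by (auto simp: cons_simplices)
          with ws show False by simp
        qed
        then show ?thesis using g1[OF x] True wz by (simp add: F_def cochains_def)
      next
        case False
        then have "F ws = f ws" unfolding F_def by auto
        moreover have "ws \<notin> simplices (P - X) (Suc j)" using ws simplices_mono[of "P - X" P] by blast
        ultimately show ?thesis using fC Suc by (simp add: cochains_def)
      qed
    qed
    have FZ: "coboundary P (Suc j) F = (\<lambda>_. 0)"
    proof
      fix ws
      show "coboundary P (Suc j) F ws = 0"
      proof (cases "ws \<in> simplices P (Suc (Suc j))")
        case False then show ?thesis by (simp add: coboundary_def)
      next
        case wsP: True
        then obtain x zs where wz: "ws = x # zs"
          by (cases ws) (auto simp: simplices_def)
        show ?thesis
        proof (cases "x \<in> X")
          case True
          have zsL: "zs \<in> simplices (L x) (Suc j)" using wsP unfolding wz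
            by (simp add: cons_simplices L_def)
          have Fzs: "F zs = f zs"
          proof -
            have "zs = hd zs # tl zs \<and> hd zs \<in> L x" using hd_simp[OF zsL] .
            then have "zs \<noteq> []" "hd zs \<notin> X" using LQ[OF True] by auto
            then show ?thesis by (simp add: F_def)
          qed
          have Fi: "F (x # (take i zs @ drop (Suc i) zs)) = g x (take i zs @ drop (Suc i) zs)" for i
            using True by (simp add: F_def)
          have "coboundary (L x) j (g x) zs = (\<Sum>i<Suc j. (-1)^i * g x (take i zs @ drop (Suc i) zs))"
            using zsL by (simp add: coboundary_def)
          then have S: "(\<Sum>i<Suc j. (-1)^i * g x (take i zs @ drop (Suc i) zs)) = fr x zs"
            using g2[OF True] by simp
          have "fr x zs = f zs" using zsL by (simp add: fr_def Suc)
          then show ?thesis using cob_cons[of x zs P j F] wsP wz Fzs Fi S by simp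
        next
          case False
          have wsQ: "ws \<in> simplices (P - X) (Suc (Suc j))"
          proof -
            have "set ws \<inter> X = {}"
            proof (rule ccontr)
              assume "set ws \<inter> X \<noteq> {}"
              then obtain y where y: "y \<in> set ws" "y \<in> X" by blast
              have "\<forall>z\<in>P. \<not> z < y" using minX y(2) by blast
              then have "ws = y # tl ws" using hd_min[OF wsP y(1)] by blast
              with wz False y show False by simp
            qed
            then show ?thesis using wsP by (auto simp: simplices_def)
          qed
          have "coboundary P (Suc j) F ws = coboundary (P - X) (Suc j) f ws"
          proof (rule cob_agree[OF _ wsQ])
            show "P - X \<subseteq> P" by blast
            show "\<forall>zs\<in>simplices (P - X) (Suc j). F zs = f zs"
            proof
              fix zs assume "zs \<in> simplices (P - X) (Suc j)"
              then have "zs = hd zs # tl zs \<and> hd zs \<in> P - X" by (rule hd_simp)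
              then have "zs \<noteq> []" "hd zs \<notin> X" by auto
              then show "F zs = f zs" by (simp add: F_def)
            qed
          qed
          then show ?thesis using fZ Suc by simp
        qed
      qed
    qed
    have "F \<in> coboundaries P (Suc j)" using vP FC FZ Suc unfolding van_def by simp
    then obtain h where h: "h \<in> cochains P j" "coboundary P j h = F"
      unfolding coboundaries_def by auto
    define h' where "h' ws = (if ws \<in> simplices (P - X) j then h ws else 0)" for ws
    have h'C: "h' \<in> cochains (P - X) j" unfolding cochains_def h'_def by auto
    have eqf: "coboundary (P - X) j h' = f"
    proof
      fix ys
      show "coboundary (P - X) j h' ys = f ys"
      proof (cases "ys \<in> simplices (P - X) (Suc j)")
        case True
        have "coboundary P j h ys = coboundary (P - X) j h' ys"
          by (rule cob_agree[OF _ True]) (auto simp: h'_def)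
        moreover have "F ys = f ys"
        proof -
          have "ys = hd ys # tl ys \<and> hd ys \<in> P - X" using True by (rule hd_simp)
          then have "ys \<noteq> []" "hd ys \<notin> X" by auto
          then show ?thesis by (simp add: F_def)
        qed
        ultimately show ?thesis using h(2) by simp
      next
        case False
        then show ?thesis using fC Suc by (simp add: coboundary_def cochains_def)
      qed
    qed
    have "coboundary (P - X) j h' \<in> coboundary (P - X) j ` cochains (P - X) j"
      using h'C by (rule imageI)
    then show ?thesis by (simp add: coboundaries_def Suc eqf)
  qed
qed


lemma van_L:
  fixes P X :: "'a::order set"
  assumes XP: "X \<subseteq> P" and minX: "\<And>x y. x \<in> X \<Longrightarrow> y \<in> P \<Longrightarrow> \<not> y < x"
    and vQ: "van TYPE('f::field) (P - X) k"
    and vP: "van TYPE('f) P (Suc k)"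
    and x: "x \<in> X"
  shows "van TYPE('f) {y\<in>P. x<y} k"
proof -
  define L where "L = {y\<in>P. x<y}"
  have xP: "x \<in> P" using XP x by blast
  have minx: "\<forall>y\<in>P. \<not> y < x" using minX x by blast
  have LQ: "L \<subseteq> P - X"
  proof
    fix y assume y: "y \<in> L"
    then have "y \<notin> X" using minX[of y x] xP unfolding L_def by blast
    then show "y \<in> P - X" using y unfolding L_def by blast
  qed
  have "g \<in> coboundaries L k" if gC: "g \<in> cochains L k" and gZ: "coboundary L k g = (\<lambda>_. 0)"
    for g :: "'a list \<Rightarrow> 'f"
  proof -
    define G where "G ws = (if ws \<noteq> [] \<and> hd ws = x then g (tl ws) else 0)" for ws
    have GC: "G \<in> cochains P (Suc k)"
      unfolding cochains_def
    proof (intro CollectI allI impI)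
      fix ws assume ws: "ws \<notin> simplices P (Suc k)"
      show "G ws = 0"
      proof (cases "ws \<noteq> [] \<and> hd ws = x")
        case True
        then have wz: "ws = x # tl ws" by (cases ws) auto
        have "tl ws \<notin> simplices L k"
        proof
          assume "tl ws \<in> simplices L k"
          then have "x # tl ws \<in> simplices P (Suc k)" using xP unfolding L_def
            by (simp add: cons_simplices)
          with ws wz show False by simp
        qed
        then show ?thesis using gC True by (simp add: G_def cochains_def)
      next
        case False then show ?thesis unfolding G_def by auto
      qed
    qed
    have GZ: "coboundary P (Suc k) G = (\<lambda>_. 0)"
    proof
      fix ws show "coboundary P (Suc k) G ws = 0"
      proof (cases "ws \<in> simplices P (Suc (Suc k))")
        case False then show ?thesis by (simp add: coboundary_def)
      next
        case wsP: True
        show ?thesis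
        proof (cases "x \<in> set ws")
          case xin: True
          have wz: "ws = x # tl ws" using hd_min[OF wsP xin minx] .
          have xz: "x # tl ws \<in> simplices P (Suc (Suc k))" using wsP wz by simp
          then have zsL: "tl ws \<in> simplices L (Suc k)" unfolding L_def
            by (simp add: cons_simplices)
          have "tl ws = hd (tl ws) # tl (tl ws) \<and> hd (tl ws) \<in> L" using hd_simp[OF zsL] .
          then have "tl ws \<noteq> []" "hd (tl ws) \<noteq> x" unfolding L_def by auto
          then have G0: "G (tl ws) = 0" unfolding G_def by auto
          have Gi: "G (x # (take i (tl ws) @ drop (Suc i) (tl ws))) = g (take i (tl ws) @ drop (Suc i) (tl ws))" for i
            by (simp add: G_def)
          have "coboundary L k g (tl ws) = (\<Sum>i<Suc k. (-1)^i * g (take i (tl ws) @ drop (Suc i) (tl ws)))"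
            using zsL by (simp add: coboundary_def)
          then have S: "(\<Sum>i<Suc k. (-1)^i * g (take i (tl ws) @ drop (Suc i) (tl ws))) = 0"
            using gZ by simp
          have "coboundary P (Suc k) G ws = coboundary P (Suc k) G (x # tl ws)" using wz by simp
          also have "\<dots> = 0" using cob_cons[OF xz, of G] G0 Gi S by (simp del: sum.lessThan_Suc)
          finally show ?thesis .
        next
          case False
          have Gz: "G zs = 0" if "set zs \<subseteq> set ws" for zs
          proof (cases "zs \<noteq> [] \<and> hd zs = x")
            case True
            then have "x \<in> set zs" by (cases zs) auto
            with that False show ?thesis by blast
          next
            case False then show ?thesis unfolding G_def by auto
          qed
          have "set (take i ws @ drop (Suc i) ws) \<subseteq> set ws" for i
            using set_take_subset set_drop_subset by fastforce
          then have "G (take i ws @ drop (Suc i) ws) = 0" for i using Gz by blast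
          then show ?thesis by (simp add: coboundary_def)
        qed
      qed
    qed
    have "G \<in> coboundaries P (Suc k)" using vP GC GZ unfolding van_def by blast
    then have "G \<in> coboundary P k ` cochains P k" by (simp add: coboundaries_def)
    then obtain H where H: "H \<in> cochains P k" "G = coboundary P k H" by blast
    define h where "h ws = (if ws \<in> simplices (P - X) k then H ws else 0)" for ws
    have hC: "h \<in> cochains (P - X) k" by (simp add: cochains_def h_def)
    have hZ: "coboundary (P - X) k h = (\<lambda>_. 0)"
    proof
      fix ys show "coboundary (P - X) k h ys = 0"
      proof (cases "ys \<in> simplices (P - X) (Suc k)")
        case True
        have eq: "coboundary P k H ys = coboundary (P - X) k h ys"
          by (rule cob_agree[OF _ True]) (auto simp: h_def)
        have "ys = hd ys # tl ys \<and> hd ys \<in> P - X" using hd_simp[OF True] .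
        then have "ys \<noteq> []" "hd ys \<noteq> x" using x by auto
        then have "G ys = 0" unfolding G_def by auto
        then show ?thesis using eq H(2) by simp
      next
        case False then show ?thesis by (simp add: coboundary_def)
      qed
    qed
    have hB: "h \<in> coboundaries (P - X) k" using vQ hC hZ unfolding van_def by blast
    show "g \<in> coboundaries L k"
    proof (cases k)
      case 0
      then have h0: "h = (\<lambda>_. 0)" using hB by (simp add: coboundaries0)
      have "g = (\<lambda>_. 0)"
      proof
        fix zs show "g zs = 0"
        proof (cases "zs = []")
          case True
          have x1: "[x] \<in> simplices P (Suc 0)" using xP by (simp add: simplices_def)
          have "g [] = G [x]" by (simp add: G_def)
          also have "\<dots> = coboundary P 0 H [x]" using H(2) 0 by simp
          also have "\<dots> = H []" using x1 by (simp add: coboundary_def)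
          also have "\<dots> = h []" by (simp add: h_def simplices_def 0)
          also have "\<dots> = 0" using h0 by simp
          finally show ?thesis using True by simp
        next
          case False then have "zs \<notin> simplices L k" using 0 by (simp add: simplices_def)
          then show ?thesis using gC by (simp add: cochains_def)
        qed
      qed
      then show ?thesis by (simp add: zero_coboundaries)
    next
      case (Suc j)
      have "h \<in> coboundary (P - X) j ` cochains (P - X) j" using hB by (simp add: coboundaries_def Suc)
      then obtain e where e: "e \<in> cochains (P - X) j" "h = coboundary (P - X) j e" by blast
      define \<phi> where "\<phi> ws = (if ws \<in> simplices L j then e ws - H (x # ws) else 0)" for ws
      have \<phi>C: "\<phi> \<in> cochains L j" by (simp add: cochains_def \<phi>_def)
      have eqg: "coboundary L j \<phi> = g"
      proof
        fix zs show "coboundary L j \<phi> zs = g zs"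
        proof (cases "zs \<in> simplices L (Suc j)")
          case True
          have xz: "x # zs \<in> simplices P (Suc (Suc j))" using True xP unfolding L_def
            by (simp add: cons_simplices)
          have zsQ: "zs \<in> simplices (P - X) (Suc j)" using True LQ simplices_mono by blast
          have faces: "take i zs @ drop (Suc i) zs \<in> simplices L j" if "i < Suc j" for i
            using face_simp[OF True that] .
          have 1: "g zs = G (x # zs)" by (simp add: G_def)
          have 2: "G (x # zs) = H zs - (\<Sum>i<Suc j. (-1)^i * H (x # (take i zs @ drop (Suc i) zs)))"
            using H(2) Suc cob_cons[OF xz, of H] by (simp del: sum.lessThan_Suc)
          have 3: "H zs = h zs" using zsQ Suc by (simp add: h_def)
          have 4: "h zs = (\<Sum>i<Suc j. (-1)^i * e (take i zs @ drop (Suc i) zs))"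
            using e(2) zsQ by (simp add: coboundary_def)
          have 5: "(\<Sum>i<Suc j. (-1)^i * e (take i zs @ drop (Suc i) zs)) - (\<Sum>i<Suc j. (-1)^i * H (x # (take i zs @ drop (Suc i) zs)))
               = (\<Sum>i<Suc j. (-1)^i * \<phi> (take i zs @ drop (Suc i) zs))"
            unfolding sum_subtractf[symmetric] by (rule sum.cong) (simp_all add: \<phi>_def faces right_diff_distrib)
          have 6: "(\<Sum>i<Suc j. (-1)^i * \<phi> (take i zs @ drop (Suc i) zs)) = coboundary L j \<phi> zs"
            using True by (simp add: coboundary_def)
          show ?thesis using 1 2 3 4 5 6 by (simp del: sum.lessThan_Suc)
        next
          case False then show ?thesis using gC Suc by (simp add: coboundary_def cochains_def)
        qed
      qed
      have "coboundary L j \<phi> \<in> coboundary L j ` cochains L j" using \<phi>C by (rule imageI)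
      then show ?thesis by (simp add: coboundaries_def Suc eqg)
    qed
  qed
  then show ?thesis unfolding van_def L_def by blast
qed




lemma sorted_distinct: "sorted_wrt (<) (xs :: 'a::order list) \<Longrightarrow> distinct xs"
  by (induction xs) auto

lemma chain_list:
  fixes E :: "'a::order set"
  assumes "finite E" "\<forall>x\<in>E. \<forall>y\<in>E. x \<le> y \<or> y \<le> x"
  shows "\<exists>xs. set xs = E \<and> sorted_wrt (<) xs \<and> length xs = card E"
  using assms
proof (induction E rule: finite_induct)
  case empty then show ?case by simp
next
  case (insert x F)
  then obtain xs where xs: "set xs = F" "sorted_wrt (<) xs"
    by blast
  define ys where "ys = filter (\<lambda>y. y < x) xs @ x # filter (\<lambda>y. x < y) xs"
  have cmp: "y < x \<or> x < y" if "y \<in> F" for y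
    using insert.prems insert.hyps(2) that by (metis insertCI order_less_le)
  have "set ys = insert x F" using xs(1) cmp unfolding ys_def by auto
  moreover have "sorted_wrt (<) ys"
    unfolding ys_def sorted_wrt_append using xs(2)
    by (auto simp: sorted_wrt_filter dest: order_less_trans)
  moreover have "length ys = card (insert x F)"
    using calculation sorted_distinct distinct_card by metis
  ultimately show ?case by blast
qed

lemma mc_mem:
  assumes "is_maximal_chain I C" "z \<in> I" "\<forall>y\<in>I. y \<le> z \<or> z \<le> y"
  shows "z \<in> C"
proof -
  have "is_chain I (insert z C)" using assms unfolding is_maximal_chain_def is_chain_def by blast
  then have "insert z C = C" using assms(1) unfolding is_maximal_chain_def by blast
  then show ?thesis by blast
qed

lemma chain_ex:
  assumes "finite I"
  shows "\<exists>C. is_maximal_chain I C"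
proof -
  have "finite {C. is_chain I C}" using assms
    by (rule finite_subset[rotated, OF finite_Pow_iff[THEN iffD2]]) (auto simp: is_chain_def)
  moreover have "{} \<in> {C. is_chain I C}" by (simp add: is_chain_def)
  ultimately obtain m where m: "m \<in> {C. is_chain I C}" "\<forall>b\<in>{C. is_chain I C}. m \<le> b \<longrightarrow> m = b"
    using finite_has_maximal[of "{C. is_chain I C}"] by blast
  then have "is_maximal_chain I m" unfolding is_maximal_chain_def by blast
  then show ?thesis by blast
qed

locale rp =
  fixes \<Gamma> :: "'a::order set" and s :: 'a
  assumes R: "finite_ranked_poset \<Gamma> s"
begin

lemma fin: "finite \<Gamma>" using R by (simp add: finite_ranked_poset_def)

lemma sG: "s \<in> \<Gamma>" using R by (simp add: finite_ranked_poset_def unique_minimal_def)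

lemma s_le: assumes "x \<in> \<Gamma>" shows "s \<le> x"
proof -
  have "finite {y\<in>\<Gamma>. y \<le> x}" using fin by simp
  moreover have "{y\<in>\<Gamma>. y \<le> x} \<noteq> {}" using assms by blast
  ultimately obtain m where m: "m \<in> {y\<in>\<Gamma>. y \<le> x}" "\<forall>b\<in>{y\<in>\<Gamma>. y \<le> x}. b \<le> m \<longrightarrow> m = b"
    using finite_has_minimal[of "{y\<in>\<Gamma>. y \<le> x}"] by blast
  have "\<not>(\<exists>y\<in>\<Gamma>. y < m)"
  proof
    assume "\<exists>y\<in>\<Gamma>. y < m"
    then obtain y where "y \<in> \<Gamma>" "y < m" by blast
    then show False using m by (metis (mono_tags, lifting) mem_Collect_eq order.strict_iff_not order_trans)
  qed
  then have "m = s" using m(1) R by (simp add: finite_ranked_poset_def unique_minimal_def)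
  then show ?thesis using m(1) by simp
qed

lemma ci_fin: "finite (closed_interval \<Gamma> a b)"
  using fin by (simp add: closed_interval_def)

lemma rk_card:
  assumes "x \<in> \<Gamma>" "is_maximal_chain (closed_interval \<Gamma> s x) C"
  shows "card C = Suc (rk \<Gamma> s x)"
proof -
  have ex: "\<exists>C. is_maximal_chain (closed_interval \<Gamma> s x) C" using chain_ex[OF ci_fin] .
  define C0 where "C0 = (SOME C. is_maximal_chain (closed_interval \<Gamma> s x) C)"
  have C0: "is_maximal_chain (closed_interval \<Gamma> s x) C0" unfolding C0_def using someI_ex[OF ex] .
  have eq: "card C = card C0" using R assms C0 unfolding finite_ranked_poset_def by blast
  have "x \<in> C0"
    by (rule mc_mem[OF C0]) (use assms(1) s_le in \<open>auto simp: closed_interval_def\<close>)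
  moreover have "finite C0" using C0 ci_fin unfolding is_maximal_chain_def is_chain_def
    by (blast intro: finite_subset)
  ultimately have "card C0 \<ge> 1" by (metis One_nat_def Suc_leI card_gt_0_iff empty_iff)
  then show ?thesis using eq unfolding rk_def C0_def by simp
qed

end




context rp
begin

lemma concat:
  assumes a: "a \<in> \<Gamma>" and b: "b \<in> \<Gamma>" and ab: "a \<le> b"
    and C: "is_maximal_chain (closed_interval \<Gamma> s a) C"
    and D: "is_maximal_chain (closed_interval \<Gamma> a b) D"
  shows "is_maximal_chain (closed_interval \<Gamma> s b) (C \<union> D) \<and> C \<inter> D = {a}"
proof -
  have aC: "a \<in> C"
    by (rule mc_mem[OF C]) (use a s_le in \<open>auto simp: closed_interval_def\<close>)
  have aD: "a \<in> D"
    by (rule mc_mem[OF D]) (use a ab in \<open>auto simp: closed_interval_def\<close>)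
  have Cs: "C \<subseteq> closed_interval \<Gamma> s a" and Cc: "\<forall>x\<in>C. \<forall>y\<in>C. x \<le> y \<or> y \<le> x"
    using C unfolding is_maximal_chain_def is_chain_def by auto
  have Ds: "D \<subseteq> closed_interval \<Gamma> a b" and Dc: "\<forall>x\<in>D. \<forall>y\<in>D. x \<le> y \<or> y \<le> x"
    using D unfolding is_maximal_chain_def is_chain_def by auto
  have sa: "s \<le> a" using s_le a by blast
  have ch: "is_chain (closed_interval \<Gamma> s b) (C \<union> D)"
  proof -
    have "C \<union> D \<subseteq> closed_interval \<Gamma> s b"
      using Cs Ds sa ab by (auto simp: closed_interval_def intro: order_trans)
    moreover have "x \<le> y \<or> y \<le> x" if "x \<in> C \<union> D" "y \<in> C \<union> D" for x y
    proof -
      have "x \<le> y" if "x \<in> C" "y \<in> D" for x y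
        using that Cs Ds by (auto simp: closed_interval_def intro: order_trans)
      then show ?thesis using Cc Dc \<open>x \<in> C \<union> D\<close> \<open>y \<in> C \<union> D\<close> by blast
    qed
    ultimately show ?thesis unfolding is_chain_def by blast
  qed
  have mx: "E = C \<union> D" if E: "is_chain (closed_interval \<Gamma> s b) E" "C \<union> D \<subseteq> E" for E
  proof
    show "C \<union> D \<subseteq> E" using E by blast
    show "E \<subseteq> C \<union> D"
    proof
      fix e assume e: "e \<in> E"
      have Es: "E \<subseteq> closed_interval \<Gamma> s b" and Ec: "\<forall>x\<in>E. \<forall>y\<in>E. x \<le> y \<or> y \<le> x"
        using E(1) unfolding is_chain_def by auto
      have eG: "e \<in> \<Gamma>" "s \<le> e" "e \<le> b" using e Es by (auto simp: closed_interval_def)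
      have "a \<in> E" using aC E(2) by blast
      then have "e \<le> a \<or> a \<le> e" using Ec e by blast
      then show "e \<in> C \<union> D"
      proof
        assume ea: "e \<le> a"
        have "is_chain (closed_interval \<Gamma> s a) (insert e C)"
          unfolding is_chain_def using Cs Cc eG ea Ec e E(2) by (auto simp: closed_interval_def)
        then have "insert e C = C" using C unfolding is_maximal_chain_def by blast
        then show ?thesis by blast
      next
        assume ae: "a \<le> e"
        have "is_chain (closed_interval \<Gamma> a b) (insert e D)"
          unfolding is_chain_def using Ds Dc eG ae Ec e E(2) by (auto simp: closed_interval_def)
        then have "insert e D = D" using D unfolding is_maximal_chain_def by blast
        then show ?thesis by blast
      qed
    qed
  qed
  have "is_maximal_chain (closed_interval \<Gamma> s b) (C \<union> D)"
    unfolding is_maximal_chain_def using ch mx by blast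
  moreover have "C \<inter> D = {a}"
    using aC aD Cs Ds by (auto simp: closed_interval_def intro: order.antisym)
  ultimately show ?thesis by blast
qed

lemma rk_lt:
  assumes a: "a \<in> \<Gamma>" and b: "b \<in> \<Gamma>" and ab: "a < b"
  shows "rk \<Gamma> s a < rk \<Gamma> s b \<and>
    (\<exists>xs. xs \<in> simplices (open_interval \<Gamma> a b) (rk \<Gamma> s b - rk \<Gamma> s a - 1))"
proof -
  obtain C where C: "is_maximal_chain (closed_interval \<Gamma> s a) C" using chain_ex[OF ci_fin] by blast
  obtain D where D: "is_maximal_chain (closed_interval \<Gamma> a b) D" using chain_ex[OF ci_fin] by blast
  have cat: "is_maximal_chain (closed_interval \<Gamma> s b) (C \<union> D)" "C \<inter> D = {a}"
    using concat[OF a b _ C D] ab by auto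
  have finC: "finite C" using C ci_fin unfolding is_maximal_chain_def is_chain_def
    by (blast intro: finite_subset)
  have finD: "finite D" using D ci_fin unfolding is_maximal_chain_def is_chain_def
    by (blast intro: finite_subset)
  have Ds: "D \<subseteq> closed_interval \<Gamma> a b" and Dc: "\<forall>x\<in>D. \<forall>y\<in>D. x \<le> y \<or> y \<le> x"
    using D unfolding is_maximal_chain_def is_chain_def by auto
  have aD: "a \<in> D"
    by (rule mc_mem[OF D]) (use a ab in \<open>auto simp: closed_interval_def\<close>)
  have bD: "b \<in> D"
    by (rule mc_mem[OF D]) (use b ab in \<open>auto simp: closed_interval_def\<close>)
  have "card (C \<union> D) + card (C \<inter> D) = card C + card D" using card_Un_Int[OF finC finD] by simp
  then have e1: "card (C \<union> D) + 1 = card C + card D" using cat(2) by simp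
  have cC: "card C = Suc (rk \<Gamma> s a)" using rk_card[OF a C] .
  have cCD: "card (C \<union> D) = Suc (rk \<Gamma> s b)" using rk_card[OF b cat(1)] .
  have "a \<noteq> b" using ab by simp
  then have cD2: "card {a, b} \<le> card D" using aD bD finD by (intro card_mono) auto
  then have "card D \<ge> 2" using \<open>a \<noteq> b\<close> by simp
  have rb: "rk \<Gamma> s b = rk \<Gamma> s a + card D - 1" using e1 cC cCD by simp
  define E where "E = D - {a, b}"
  have cE: "card E = card D - 2" unfolding E_def using aD bD \<open>a \<noteq> b\<close> finD
    by (simp add: card_Diff_subset)
  have Eo: "E \<subseteq> open_interval \<Gamma> a b" unfolding E_def using Ds
    by (auto simp: closed_interval_def open_interval_def order_le_less)
  obtain xs where xs: "set xs = E" "sorted_wrt (<) xs" "length xs = card E"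
    using chain_list[of E] finD Dc unfolding E_def by auto
  have "xs \<in> simplices (open_interval \<Gamma> a b) (rk \<Gamma> s b - rk \<Gamma> s a - 1)"
    using xs Eo cE rb \<open>card D \<ge> 2\<close> by (simp add: simplices_def)
  moreover have "rk \<Gamma> s a < rk \<Gamma> s b" using rb \<open>card D \<ge> 2\<close> by simp
  ultimately show ?thesis by blast
qed

lemma rk_s: "rk \<Gamma> s s = 0"
proof -
  have "closed_interval \<Gamma> s s = {s}" using sG by (auto simp: closed_interval_def)
  moreover have "is_maximal_chain {s} {s}" by (auto simp: is_maximal_chain_def is_chain_def)
  ultimately have "card {s} = Suc (rk \<Gamma> s s)" using rk_card[OF sG] by metis
  then show ?thesis by simp
qed

lemma simp_bound:
  assumes a: "a \<in> \<Gamma>" and b: "b \<in> \<Gamma>" and xs: "xs \<in> simplices (open_interval \<Gamma> a b) k"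
  shows "k \<le> rk \<Gamma> s b - rk \<Gamma> s a - 1"
proof -
  have xsG: "set xs \<subseteq> open_interval \<Gamma> a b" "sorted_wrt (<) xs" "length xs = k"
    using xs by (auto simp: simplices_def)
  have inG: "\<forall>y\<in>set xs. y \<in> \<Gamma>" using xsG(1) by (auto simp: open_interval_def)
  have "sorted_wrt (\<lambda>x y. rk \<Gamma> s x < rk \<Gamma> s y) xs"
    using sorted_wrt_mono_rel[of xs "(<)" "\<lambda>x y. rk \<Gamma> s x < rk \<Gamma> s y"] xsG(2) inG rk_lt by blast
  then have "sorted_wrt (<) (map (rk \<Gamma> s) xs)" by (simp add: sorted_wrt_map)
  then have "distinct (map (rk \<Gamma> s) xs)" by (rule sorted_distinct)
  then have c: "card (rk \<Gamma> s ` set xs) = k" using xsG(3) distinct_card by fastforce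
  have "rk \<Gamma> s ` set xs \<subseteq> {rk \<Gamma> s a<..<rk \<Gamma> s b}"
    using xsG(1) a b rk_lt by (auto simp: open_interval_def)
  then have "card (rk \<Gamma> s ` set xs) \<le> card {rk \<Gamma> s a<..<rk \<Gamma> s b}" by (intro card_mono) auto
  then show ?thesis using c by simp
qed

lemma dim_open:
  assumes a: "a \<in> \<Gamma>" and b: "b \<in> \<Gamma>" and ab: "a < b"
  shows "order_complex_dim (open_interval \<Gamma> a b) = int (rk \<Gamma> s b) - int (rk \<Gamma> s a) - 2"
proof -
  define N where "N = rk \<Gamma> s b - rk \<Gamma> s a - 1"
  have lt: "rk \<Gamma> s a < rk \<Gamma> s b" using rk_lt[OF a b ab] by blast
  have ex: "simplices (open_interval \<Gamma> a b) N \<noteq> {}" using rk_lt[OF a b ab] unfolding N_def by blast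
  have bd: "k \<le> N" if "simplices (open_interval \<Gamma> a b) k \<noteq> {}" for k
    using that simp_bound[OF a b] unfolding N_def by blast
  have S: "{int k - 1 |k. simplices (open_interval \<Gamma> a b) k \<noteq> {}} =
      (\<lambda>k. int k - 1) ` {k. simplices (open_interval \<Gamma> a b) k \<noteq> {}}" by auto
  have fS: "finite {k. simplices (open_interval \<Gamma> a b) k \<noteq> {}}"
    by (rule finite_subset[of _ "{..N}"]) (use bd in auto)
  have "Max ((\<lambda>k. int k - 1) ` {k. simplices (open_interval \<Gamma> a b) k \<noteq> {}}) = int N - 1"
  proof (rule Max_eqI)
    show "finite ((\<lambda>k. int k - 1) ` {k. simplices (open_interval \<Gamma> a b) k \<noteq> {}})" using fS by simp
  next
    fix y assume "y \<in> (\<lambda>k. int k - 1) ` {k. simplices (open_interval \<Gamma> a b) k \<noteq> {}}"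
    then obtain k where k: "simplices (open_interval \<Gamma> a b) k \<noteq> {}" "y = int k - 1" by blast
    then show "y \<le> int N - 1" using bd[OF k(1)] by simp
  next
    show "int N - 1 \<in> (\<lambda>k. int k - 1) ` {k. simplices (open_interval \<Gamma> a b) k \<noteq> {}}"
      using ex by blast
  qed
  then show ?thesis unfolding order_complex_dim_def S N_def using lt by simp
qed

end




lemma van_high:
  assumes "simplices P k = {}" "0 < k"
  shows "van TYPE('f::field) P k"
  unfolding van_def
proof (intro ballI impI)
  fix f :: "'a list \<Rightarrow> 'f" assume "f \<in> cochains P k"
  then have "f = (\<lambda>_. 0)" using assms(1) by (auto simp: cochains_def)
  then show "f \<in> coboundaries P k" by (simp add: zero_coboundaries)
qed

context rp
begin

definition S :: "'a \<Rightarrow> nat \<Rightarrow> 'a set" where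
  "S c r = {y \<in> \<Gamma>. s < y \<and> y < c \<and> r \<le> rk \<Gamma> s y}"

lemma layer_XP: "{y \<in> S c r. rk \<Gamma> s y = r} \<subseteq> S c r" by blast

lemma layer_min:
  assumes "x \<in> {y \<in> S c r. rk \<Gamma> s y = r}" "y \<in> S c r"
  shows "\<not> y < x"
proof
  assume "y < x"
  moreover have "y \<in> \<Gamma>" "x \<in> \<Gamma>" using assms by (auto simp: S_def)
  ultimately have "rk \<Gamma> s y < rk \<Gamma> s x" using rk_lt by blast
  then show False using assms by (auto simp: S_def)
qed

lemma layer_Q: "S c r - {y \<in> S c r. rk \<Gamma> s y = r} = S c (Suc r)"
  by (auto simp: S_def)

lemma layer_L:
  assumes "x \<in> {y \<in> S c r. rk \<Gamma> s y = r}"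
  shows "{y \<in> S c r. x < y} = open_interval \<Gamma> x c"
proof
  show "{y \<in> S c r. x < y} \<subseteq> open_interval \<Gamma> x c" by (auto simp: S_def open_interval_def)
next
  show "open_interval \<Gamma> x c \<subseteq> {y \<in> S c r. x < y}"
  proof
    fix y assume y: "y \<in> open_interval \<Gamma> x c"
    have x: "x \<in> \<Gamma>" "s < x" "rk \<Gamma> s x = r" using assms by (auto simp: S_def)
    have "y \<in> \<Gamma>" "x < y" "y < c" using y by (auto simp: open_interval_def)
    moreover have "s < y" using x \<open>x < y\<close> by (auto intro: order.strict_trans)
    moreover have "r \<le> rk \<Gamma> s y" using rk_lt[OF x(1) \<open>y \<in> \<Gamma>\<close> \<open>x < y\<close>] x by simp
    ultimately show "y \<in> {y \<in> S c r. x < y}" by (simp add: S_def)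
  qed
qed

lemma S1: "S c (Suc 0) = open_interval \<Gamma> s c"
proof -
  have "Suc 0 \<le> rk \<Gamma> s y" if "y \<in> \<Gamma>" "s < y" for y
    using rk_lt[OF sG that] rk_s by simp
  then show ?thesis by (auto simp: S_def open_interval_def)
qed

lemma Gbq: "int r = int (rk \<Gamma> s b) - q + 1 \<Longrightarrow> Gamma_bq \<Gamma> s b q = S b r"
  by (auto simp: Gamma_bq_def S_def)

lemma van_dim:
  assumes a: "a \<in> \<Gamma>" and b: "b \<in> \<Gamma>" and ab: "a < b"
    and n: "n > int (rk \<Gamma> s b) - int (rk \<Gamma> s a) - 2"
  shows "reduced_cohomology_vanishes TYPE('f::field) (open_interval \<Gamma> a b) n"
proof -
  have lt: "rk \<Gamma> s a < rk \<Gamma> s b" using rk_lt[OF a b ab] by blast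
  have "simplices (open_interval \<Gamma> a b) (nat (n+1)) = {}"
    using simp_bound[OF a b] n lt by fastforce
  moreover have "0 < nat (n+1)" using n lt by simp
  ultimately show ?thesis unfolding rcv_iff using van_high by blast
qed

lemma fwd:
  assumes CM: "cohen_macaulay TYPE('f::field) \<Gamma>" and c: "c \<in> \<Gamma>" "c \<noteq> s"
  shows "1 \<le> r \<Longrightarrow> r \<le> rk \<Gamma> s c \<Longrightarrow> \<forall>m. m < int (rk \<Gamma> s c) - int r - 1 \<longrightarrow>
           reduced_cohomology_vanishes TYPE('f) (S c r) m"
proof (induction r)
  case 0 then show ?case by simp
next
  case (Suc r)
  show ?case
  proof (intro allI impI)
    fix m :: int assume m: "m < int (rk \<Gamma> s c) - int (Suc r) - 1"
    show "reduced_cohomology_vanishes TYPE('f) (S c (Suc r)) m"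
    proof (cases "r = 0")
      case True
      have sc: "s < c" using s_le[OF c(1)] c(2) by auto
      have d: "order_complex_dim (open_interval \<Gamma> s c) = int (rk \<Gamma> s c) - 2"
        using dim_open[OF sG c(1) sc] rk_s by simp
      have "reduced_cohomology_vanishes TYPE('f) (open_interval \<Gamma> s c) m"
        using CM sG c(1) sc m True d unfolding cohen_macaulay_def by force
      then show ?thesis using True S1 by simp
    next
      case False
      have IH: "\<forall>m. m < int (rk \<Gamma> s c) - int r - 1 \<longrightarrow> reduced_cohomology_vanishes TYPE('f) (S c r) m"
        using Suc False by simp
      show ?thesis
      proof (cases "m < -1")
        case True then show ?thesis by (simp add: rcv_iff)
      next
        case mge: False
        define X where "X = {y \<in> S c r. rk \<Gamma> s y = r}"
        have vP: "van TYPE('f) (S c r) (nat (m+1))"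
        proof -
          have "m < int (rk \<Gamma> s c) - int r - 1" using m by simp
          then have "reduced_cohomology_vanishes TYPE('f) (S c r) m" using IH by blast
          then show ?thesis using mge by (simp add: rcv_iff)
        qed
        have vL: "van TYPE('f) {y\<in>S c r. x<y} (nat (m+1))" if x: "x \<in> X" for x
        proof -
          have xs: "x \<in> \<Gamma>" "x < c" "rk \<Gamma> s x = r" using x by (auto simp: X_def S_def)
          have d: "order_complex_dim (open_interval \<Gamma> x c) = int (rk \<Gamma> s c) - int r - 2"
            using dim_open[OF xs(1) c(1) xs(2)] xs(3) by simp
          have "reduced_cohomology_vanishes TYPE('f) (open_interval \<Gamma> x c) m"
            using CM xs c(1) m d unfolding cohen_macaulay_def by force
          then show ?thesis using layer_L[of x c r] x mge unfolding X_def by (simp add: rcv_iff)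
        qed
        have "van TYPE('f) (S c r - X) (nat (m+1))"
          by (rule van_Q[OF _ _ vP vL]) (use layer_min in \<open>auto simp: X_def\<close>)
        then show ?thesis using layer_Q[of c r] unfolding X_def by (simp add: rcv_iff)
      qed
    qed
  qed
qed

end




context rp
begin

lemma main_fwd:
  assumes CM: "cohen_macaulay TYPE('f::field) \<Gamma>"
  shows "\<forall>b \<in> \<Gamma> - {s}. \<forall>q n :: int. n < q \<and> q \<le> int (rk \<Gamma> s b) \<longrightarrow>
        reduced_cohomology_vanishes TYPE('f) (Gamma_bq \<Gamma> s b q) (n - 2)"
proof (intro ballI allI impI)
  fix b q n assume b: "b \<in> \<Gamma> - {s}" and qn: "n < q \<and> q \<le> int (rk \<Gamma> s b)"
  show "reduced_cohomology_vanishes TYPE('f) (Gamma_bq \<Gamma> s b q) (n - 2)"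
  proof (cases "q \<le> 0")
    case True then show ?thesis using qn by (simp add: rcv_iff)
  next
    case False
    define r where "r = nat (int (rk \<Gamma> s b) - q + 1)"
    have r: "int r = int (rk \<Gamma> s b) - q + 1" using qn unfolding r_def by simp
    have r1: "1 \<le> r" "r \<le> rk \<Gamma> s b" using r False qn by linarith+
    have m: "n - 2 < int (rk \<Gamma> s b) - int r - 1" using r qn by linarith
    have "\<forall>m. m < int (rk \<Gamma> s b) - int r - 1 \<longrightarrow> reduced_cohomology_vanishes TYPE('f) (S b r) m"
      using fwd[OF CM, of b r] b r1 by blast
    then have "reduced_cohomology_vanishes TYPE('f) (S b r) (n - 2)" using m by blast
    then show ?thesis using Gbq[OF r] by simp
  qed
qed

lemma main_bwd:
  assumes H: "\<forall>b \<in> \<Gamma> - {s}. \<forall>q n :: int. n < q \<and> q \<le> int (rk \<Gamma> s b) \<longrightarrow>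
        reduced_cohomology_vanishes TYPE('f::field) (Gamma_bq \<Gamma> s b q) (n - 2)"
  shows "cohen_macaulay TYPE('f) \<Gamma>"
  unfolding cohen_macaulay_def
proof (intro ballI impI allI)
  fix a b n assume a: "a \<in> \<Gamma>" and b: "b \<in> \<Gamma>" and ab: "a < b"
    and nv: "\<not> reduced_cohomology_vanishes TYPE('f) (open_interval \<Gamma> a b) n"
  have d: "order_complex_dim (open_interval \<Gamma> a b) = int (rk \<Gamma> s b) - int (rk \<Gamma> s a) - 2"
    by (rule dim_open[OF a b ab])
  have bs: "b \<in> \<Gamma> - {s}" using s_le[OF a] ab b by auto
  have H': "reduced_cohomology_vanishes TYPE('f) (Gamma_bq \<Gamma> s b q) (n' - 2)"
    if "n' < q" "q \<le> int (rk \<Gamma> s b)" for q n' using H bs that by blast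
  show "n = order_complex_dim (open_interval \<Gamma> a b)"
  proof (rule ccontr)
    assume ne: "n \<noteq> order_complex_dim (open_interval \<Gamma> a b)"
    consider "n > int (rk \<Gamma> s b) - int (rk \<Gamma> s a) - 2" | "n < int (rk \<Gamma> s b) - int (rk \<Gamma> s a) - 2"
      using ne d by linarith
    then show False
    proof cases
      case 1 then show False using van_dim[OF a b ab] nv by blast
    next
      case 2
      show False
      proof (cases "n < -1")
        case True then show False using nv by (simp add: rcv_iff)
      next
        case nge: False
        show False
        proof (cases "a = s")
          case True
          have "reduced_cohomology_vanishes TYPE('f) (Gamma_bq \<Gamma> s b (int (rk \<Gamma> s b))) (n + 2 - 2)"
            using H'[of "n+2" "int (rk \<Gamma> s b)"] 2 True rk_s by simp
          moreover have "Gamma_bq \<Gamma> s b (int (rk \<Gamma> s b)) = open_interval \<Gamma> s b"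
            using Gbq[of 1 b "int (rk \<Gamma> s b)"] S1 by simp
          ultimately show False using nv True by simp
        next
          case False
          define r where "r = rk \<Gamma> s a"
          have sa: "s < a" using s_le[OF a] False by auto
          have r1: "1 \<le> r" using rk_lt[OF sG a sa] rk_s unfolding r_def by simp
          define X where "X = {y \<in> S b r. rk \<Gamma> s y = r}"
          have aX: "a \<in> X" using a sa ab unfolding X_def S_def r_def by simp
          have vQ: "van TYPE('f) (S b r - X) (nat (n+1))"
          proof -
            have "reduced_cohomology_vanishes TYPE('f) (Gamma_bq \<Gamma> s b (int (rk \<Gamma> s b) - int r)) (n + 2 - 2)"
              using H'[of "n+2" "int (rk \<Gamma> s b) - int r"] 2 unfolding r_def by simp
            moreover have "Gamma_bq \<Gamma> s b (int (rk \<Gamma> s b) - int r) = S b (Suc r)" by (rule Gbq) simp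
            ultimately show ?thesis using layer_Q[of b r] nge unfolding X_def by (simp add: rcv_iff)
          qed
          have vP: "van TYPE('f) (S b r) (Suc (nat (n+1)))"
          proof -
            have "reduced_cohomology_vanishes TYPE('f) (Gamma_bq \<Gamma> s b (int (rk \<Gamma> s b) - int r + 1)) (n + 3 - 2)"
              using H'[of "n+3" "int (rk \<Gamma> s b) - int r + 1"] 2 r1 unfolding r_def by simp
            moreover have "Gamma_bq \<Gamma> s b (int (rk \<Gamma> s b) - int r + 1) = S b r" by (rule Gbq) simp
            moreover have "nat (n + 3 - 2 + 1) = Suc (nat (n+1))" using nge by simp
            ultimately show ?thesis using nge by (simp add: rcv_iff)
          qed
          have "van TYPE('f) {y\<in>S b r. a<y} (nat (n+1))"
            by (rule van_L[OF _ _ vQ vP aX]) (use layer_min in \<open>auto simp: X_def\<close>)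
          then have "reduced_cohomology_vanishes TYPE('f) (open_interval \<Gamma> a b) n"
            using layer_L[of a b r] aX nge unfolding X_def by (simp add: rcv_iff)
          with nv show False by simp
        qed
      qed
    qed
  qed
qed

end

theorem proposition4p2:
  fixes \<Gamma> :: "'a::order set" and s :: 'a
  assumes "finite_ranked_poset \<Gamma> s"
  shows "cohen_macaulay TYPE('f::field) \<Gamma> \<longleftrightarrow>
    (\<forall>b \<in> \<Gamma> - {s}. \<forall>q n :: int. n < q \<and> q \<le> int (rk \<Gamma> s b) \<longrightarrow>
        reduced_cohomology_vanishes TYPE('f) (Gamma_bq \<Gamma> s b q) (n - 2))"
proof -
  interpret rp \<Gamma> s using assms by unfold_locales
  show ?thesis using main_fwd main_bwd by blast
qed


end
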